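(* Let $\mathbb{F}$ be a field, let $A$ be a finite set equipped with a linear ordering $\preceq$, and let $k\ge 2$ be an integer. Let $f:A^k\to\mathbb{F}$ be a function such that $f(x_1,x_2,\ldots,x_k)\neq 0$ implies $x_1\preceq x_i\preceq x_k$ for all $i=1,2,\ldots,k$. Then the slice rank of $f$ is at least \[\bigl|\{x\in A: f(x,x,\ldots,x)\neq 0\}\bigr|.\]
   Context: A function $g:A^k\to\mathbb{F}$ is called a slice if it can be written as $g(x_1,\ldots,x_k)=h(x_i)\,g'(x_1,\ldots,x_{i-1},x_{i+1},\ldots,x_k)$ for some $1\le i\le k$ and some functions $h:A\to\mathbb{F}$ and $g':A^{k-1}\to\mathbb{F}$. The slice rank of a function $f:A^k\to\mathbb{F}$ is the minimum number $r$ such that $f$ can be written as a sum of $r$ slices. (For $k=2$ this is the usual matrix rank.) *)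

theory Defs
  imports "HOL-Library.FuncSet"
begin

text \<open>Points of A^k are represented as extensional functions
  x in PiE {..<k} (%_. A) (coordinates indexed 0..k-1).\<close>

definition is_slice :: "'a set \<Rightarrow> nat \<Rightarrow> ((nat \<Rightarrow> 'a) \<Rightarrow> 'b::field) \<Rightarrow> bool" where
  "is_slice A k g \<longleftrightarrow>
     (\<exists>i<k. \<exists>(h::'a \<Rightarrow> 'b) (g'::(nat \<Rightarrow> 'a) \<Rightarrow> 'b).
        \<forall>x \<in> {..<k} \<rightarrow>\<^sub>E A. g x = h (x i) * g' (x(i := undefined)))"

definition slice_rank :: "'a set \<Rightarrow> nat \<Rightarrow> ((nat \<Rightarrow> 'a) \<Rightarrow> 'b::field) \<Rightarrow> nat" where
  "slice_rank A k f = (LEAST r. \<exists>gs :: nat \<Rightarrow> (nat \<Rightarrow> 'a) \<Rightarrow> 'b.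
      (\<forall>j<r. is_slice A k (gs j)) \<and>
      (\<forall>x \<in> {..<k} \<rightarrow>\<^sub>E A. f x = (\<Sum>j<r. gs j x)))"

end

theory Submission
  imports Defs
begin

lemma upd_PiE: "x \<in> Pi\<^sub>E I B \<Longrightarrow> i \<in> I \<Longrightarrow> c \<in> B i \<Longrightarrow> x(i:=c) \<in> Pi\<^sub>E I B"
  by (auto simp: PiE_def extensional_def Pi_def)

lemma slice_mono: "is_slice A k g \<Longrightarrow> B \<subseteq> A \<Longrightarrow> is_slice B k g"
proof -
  assume "is_slice A k g" "B \<subseteq> A"
  then obtain i h g' where "i<k" "\<forall>x \<in> {..<k} \<rightarrow>\<^sub>E A. g x = h (x i) * g' (x(i := undefined))"
    unfolding is_slice_def by blast
  moreover have "{..<k} \<rightarrow>\<^sub>E B \<subseteq> {..<k} \<rightarrow>\<^sub>E A" using \<open>B \<subseteq> A\<close> by (rule PiE_mono)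
  ultimately show ?thesis unfolding is_slice_def by blast
qed

lemma slice_elim:
  fixes g :: "(nat \<Rightarrow> 'a) \<Rightarrow> 'b::field"
  assumes "is_slice B k g" "i < k" "c \<in> B"
  shows "is_slice B k (\<lambda>x. g x - h (x i) / h c * g (x(i:=c)))"
proof -
  from assms(1) obtain l hl gl where l: "l < k"
    and eq: "\<forall>x \<in> {..<k} \<rightarrow>\<^sub>E B. g x = hl (x l) * gl (x(l := undefined))"
    unfolding is_slice_def by blast
  have mem: "x(i:=c) \<in> {..<k} \<rightarrow>\<^sub>E B" if "x \<in> {..<k} \<rightarrow>\<^sub>E B" for x
    using upd_PiE[OF that] assms by auto
  show ?thesis
  proof (cases "l = i")
    case True
    show ?thesis unfolding is_slice_def
    proof (intro exI[of _ i] conjI exI[of _ "\<lambda>a. hl a - h a / h c * hl c"] exI[of _ gl] ballI)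
      show "i < k" by fact
      fix x assume x: "x \<in> {..<k} \<rightarrow>\<^sub>E B"
      have "g x = hl (x i) * gl (x(i := undefined))" using eq x True by auto
      moreover have "g (x(i:=c)) = hl c * gl (x(i := undefined))" using eq mem[OF x] True by auto
      ultimately show "g x - h (x i) / h c * g (x(i:=c)) = (hl (x i) - h (x i) / h c * hl c) * gl (x(i := undefined))"
        by (simp add: algebra_simps)
    qed
  next
    case False
    show ?thesis unfolding is_slice_def
    proof (intro exI[of _ l] conjI exI[of _ hl] exI[of _ "\<lambda>y. gl y - h (y i) / h c * gl (y(i:=c))"] ballI)
      show "l < k" by fact
      fix x assume x: "x \<in> {..<k} \<rightarrow>\<^sub>E B"
      have "g x = hl (x l) * gl (x(l := undefined))" using eq x by auto
      moreover have "g (x(i:=c)) = hl (x l) * gl (x(l := undefined, i := c))"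
        using eq mem[OF x] False by (auto simp: fun_upd_twist)
      ultimately show "g x - h (x i) / h c * g (x(i:=c)) = hl (x l) * (gl (x(l := undefined)) - h ((x(l := undefined)) i) / h c * gl (x(l := undefined, i := c)))"
        using False by (simp add: algebra_simps)
    qed
  qed
qed

definition T :: "nat \<Rightarrow> 'a::linorder set \<Rightarrow> ((nat \<Rightarrow> 'a) \<Rightarrow> 'b::field) \<Rightarrow> bool" where
  "T k B f \<longleftrightarrow> (\<forall>x\<in>{..<k} \<rightarrow>\<^sub>E B. f x \<noteq> 0 \<longrightarrow> x 0 \<le> x (k-1) \<and> (x 0 = x (k-1) \<longrightarrow> (\<forall>l<k. x l = x 0)))"

lemma main:
  fixes f :: "(nat \<Rightarrow> 'a::linorder) \<Rightarrow> 'b::field"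
  assumes k: "k \<ge> 2"
  shows "finite B \<Longrightarrow> T k B f \<Longrightarrow> (\<forall>j<r. is_slice B k (gs j)) \<Longrightarrow>
    (\<forall>x\<in>{..<k} \<rightarrow>\<^sub>E B. f x = (\<Sum>j<r. gs j x)) \<Longrightarrow>
    card {b\<in>B. f (\<lambda>i\<in>{..<k}. b) \<noteq> 0} \<le> r"
proof (induction r arbitrary: B f gs)
  case 0
  have "(\<lambda>i\<in>{..<k}. b) \<in> {..<k} \<rightarrow>\<^sub>E B" if "b \<in> B" for b using that by auto
  then have "{b\<in>B. f (\<lambda>i\<in>{..<k}. b) \<noteq> 0} = {}" using 0 by auto
  then show ?case by (metis card.empty order_refl)
next
  case (Suc r)
  from Suc.prems(3) have "is_slice B k (gs r)" by auto
  then obtain i h g' where i: "i < k"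
    and eq: "\<forall>x \<in> {..<k} \<rightarrow>\<^sub>E B. gs r x = h (x i) * g' (x(i := undefined))"
    unfolding is_slice_def by blast
  show ?case
  proof (cases "\<forall>a\<in>B. h a = 0")
    case True
    have "\<forall>x\<in>{..<k} \<rightarrow>\<^sub>E B. f x = (\<Sum>j<r. gs j x)"
    proof
      fix x assume x: "x \<in> {..<k} \<rightarrow>\<^sub>E B"
      have "x i \<in> B" using x i by auto
      then have "gs r x = 0" using eq x True by auto
      then show "f x = (\<Sum>j<r. gs j x)" using Suc.prems(4) x by auto
    qed
    moreover have "\<forall>j<r. is_slice B k (gs j)" using Suc.prems(3) by auto
    ultimately have "card {b\<in>B. f (\<lambda>i\<in>{..<k}. b) \<noteq> 0} \<le> r"
      using Suc.IH[of B f gs] Suc.prems(1,2) by blast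
    then show ?thesis by linarith
  next
    case False
    define H where "H = {a\<in>B. h a \<noteq> 0}"
    have Hf: "finite H" "H \<noteq> {}" using False Suc.prems(1) unfolding H_def by auto
    define c where "c = (if i = k - 1 then Min H else Max H)"
    have cH: "c \<in> H" unfolding c_def using Hf by auto
    then have cB: "c \<in> B" and hc: "h c \<noteq> 0" unfolding H_def by auto
    have cmax: "a \<le> c" if "i = 0" "a \<in> B" "h a \<noteq> 0" for a
    proof -
      have "i \<noteq> k - 1" using that(1) k by simp
      then have "c = Max H" unfolding c_def by simp
      moreover have "a \<in> H" using that unfolding H_def by simp
      ultimately show ?thesis using Max_ge[OF Hf(1)] by simp
    qed
    have cmin: "c \<le> a" if "i = k - 1" "a \<in> B" "h a \<noteq> 0" for a
    proof -
      have "c = Min H" unfolding c_def using that(1) by simp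
      moreover have "a \<in> H" using that unfolding H_def by simp
      ultimately show ?thesis using Min_le[OF Hf(1)] by simp
    qed
    define B' where "B' = B - {c}"
    define f' where "f' = (\<lambda>x. f x - h (x i) / h c * f (x(i:=c)))"
    define gs' where "gs' = (\<lambda>j x. gs j x - h (x i) / h c * gs j (x(i:=c)))"
    have sub: "{..<k} \<rightarrow>\<^sub>E B' \<subseteq> {..<k} \<rightarrow>\<^sub>E B" unfolding B'_def by (rule PiE_mono) auto
    have memc: "x(i:=c) \<in> {..<k} \<rightarrow>\<^sub>E B" if "x \<in> {..<k} \<rightarrow>\<^sub>E B" for x
      using upd_PiE[OF that] i cB by auto
    have k0: "0 < k" "0 \<noteq> k - 1" "k - 1 < k" using k by auto
    have TB: "x 0 \<le> x (k-1) \<and> (x 0 = x (k-1) \<longrightarrow> (\<forall>l<k. x l = x 0))"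
      if "x \<in> {..<k} \<rightarrow>\<^sub>E B" "f x \<noteq> 0" for x
    proof -
      have "\<forall>x\<in>{..<k} \<rightarrow>\<^sub>E B. f x \<noteq> 0 \<longrightarrow> x 0 \<le> x (k-1) \<and> (x 0 = x (k-1) \<longrightarrow> (\<forall>l<k. x l = x 0))"
        using Suc.prems(2) unfolding T_def .
      then show ?thesis using that by blast
    qed
    have A1: "finite B'" using Suc.prems(1) unfolding B'_def by auto
    have A2: "T k B' f'" unfolding T_def
    proof (intro ballI impI)
      fix x assume x': "x \<in> {..<k} \<rightarrow>\<^sub>E B'" and nz: "f' x \<noteq> 0"
      have x: "x \<in> {..<k} \<rightarrow>\<^sub>E B" using x' sub by auto
      have xB': "x l \<in> B'" if "l < k" for l using x' that by auto
      show "x 0 \<le> x (k-1) \<and> (x 0 = x (k-1) \<longrightarrow> (\<forall>l<k. x l = x 0))"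
      proof (cases "f x \<noteq> 0")
        case True then show ?thesis using TB[OF x] by blast
      next
        case False
        then have hx: "h (x i) \<noteq> 0" and fy: "f (x(i:=c)) \<noteq> 0" using nz unfolding f'_def by auto
        note T2 = TB[OF memc[OF x] fy]
        have "x 0 < x (k-1)"
        proof -
          have x0: "x 0 \<in> B'" "x (k-1) \<in> B'" "x i \<in> B'" using xB' k0 i by auto
          consider "i = 0" | "i = k - 1" | "i \<noteq> 0" "i \<noteq> k - 1" by blast
          then show ?thesis
          proof cases
            case 1
            then have "x 0 \<le> c" using cmax x0 hx unfolding B'_def by auto
            moreover have "x 0 \<noteq> c" using x0 unfolding B'_def by auto
            moreover have "c \<le> x (k-1)" using T2 1 k0 by auto
            ultimately show ?thesis by auto
          next
            case 2
            then have "c \<le> x (k-1)" using cmin x0 hx unfolding B'_def by auto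
            moreover have "x (k-1) \<noteq> c" using x0 unfolding B'_def by auto
            moreover have "x 0 \<le> c" using T2 2 k0 by auto
            ultimately show ?thesis by auto
          next
            case 3
            then have "x 0 \<le> x (k-1)" using T2 by auto
            moreover have "x 0 \<noteq> x (k-1)"
            proof
              assume "x 0 = x (k-1)"
              moreover have "(x(i:=c)) 0 = x 0" "(x(i:=c)) (k-1) = x (k-1)" "(x(i:=c)) i = c"
                using 3 by simp_all
              ultimately have "(x(i:=c)) i = (x(i:=c)) 0" using T2 i by metis
              then have "c = x 0" using 3 by simp
              then show False using x0 unfolding B'_def by auto
            qed
            ultimately show ?thesis by auto
          qed
        qed
        then have "x 0 \<le> x (k-1)" "x 0 \<noteq> x (k-1)" by simp_all
        then show ?thesis by blast
      qed
    qed
    have A3: "\<forall>j<r. is_slice B' k (gs' j)"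
    proof (intro allI impI)
      fix j assume "j < r"
      then have "is_slice B k (gs j)" using Suc.prems(3) by auto
      from slice_elim[OF this i cB, of h] have "is_slice B k (gs' j)"
        unfolding gs'_def by simp
      then show "is_slice B' k (gs' j)" by (rule slice_mono) (auto simp: B'_def)
    qed
    have A4: "\<forall>x\<in>{..<k} \<rightarrow>\<^sub>E B'. f' x = (\<Sum>j<r. gs' j x)"
    proof
      fix x assume "x \<in> {..<k} \<rightarrow>\<^sub>E B'"
      then have x: "x \<in> {..<k} \<rightarrow>\<^sub>E B" using sub by auto
      have e1: "f x = (\<Sum>j<Suc r. gs j x)" using Suc.prems(4) x by auto
      have e2: "f (x(i:=c)) = (\<Sum>j<Suc r. gs j (x(i:=c)))" using Suc.prems(4) memc[OF x] by auto
      have g0: "gs' r x = 0"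
      proof -
        have "gs r x = h (x i) * g' (x(i := undefined))" using eq x by auto
        moreover have "gs r (x(i:=c)) = h c * g' (x(i := undefined))" using eq memc[OF x] by auto
        ultimately show ?thesis unfolding gs'_def using hc by simp
      qed
      have ss: "(\<Sum>j<Suc r. gs' j x) = (\<Sum>j<Suc r. gs j x) - h (x i) / h c * (\<Sum>j<Suc r. gs j (x(i:=c)))"
        unfolding gs'_def sum_subtractf sum_distrib_left by (rule refl)
      have "f' x = (\<Sum>j<Suc r. gs' j x)"
        unfolding ss by (simp only: f'_def e1 e2)
      also have "\<dots> = (\<Sum>j<r. gs' j x)" using g0 by simp
      finally show "f' x = (\<Sum>j<r. gs' j x)" .
    qed
    have IH: "card {b\<in>B'. f' (\<lambda>i\<in>{..<k}. b) \<noteq> 0} \<le> r"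
      using Suc.IH[OF A1 A2 A3 A4] .
    have incl: "{b\<in>B. f (\<lambda>i\<in>{..<k}. b) \<noteq> 0} \<subseteq> insert c {b\<in>B'. f' (\<lambda>i\<in>{..<k}. b) \<noteq> 0}"
    proof
      fix b assume b: "b \<in> {b\<in>B. f (\<lambda>i\<in>{..<k}. b) \<noteq> 0}"
      show "b \<in> insert c {b\<in>B'. f' (\<lambda>i\<in>{..<k}. b) \<noteq> 0}"
      proof (cases "b = c")
        case True then show ?thesis by simp
      next
        case bc: False
        define y where "y = (\<lambda>i\<in>{..<k}. b)(i:=c)"
        have dB: "(\<lambda>i\<in>{..<k}. b) \<in> {..<k} \<rightarrow>\<^sub>E B" using b by auto
        have yB: "y \<in> {..<k} \<rightarrow>\<^sub>E B" unfolding y_def using memc[OF dB] .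
        have "h b / h c * f y = 0"
        proof (cases "h b = 0")
          case True then show ?thesis by simp
        next
          case hb: False
          have "f y = 0"
          proof (rule ccontr)
            assume "f y \<noteq> 0"
            note T2 = TB[OF yB this]
            consider "i = 0" | "i = k - 1" | "i \<noteq> 0" "i \<noteq> k - 1" by blast
            then show False
            proof cases
              case 1
              then have "b \<le> c" using cmax b hb by auto
              moreover have "c \<le> b" using T2 1 k0 unfolding y_def by auto
              ultimately show False using bc by auto
            next
              case 2
              then have "c \<le> b" using cmin b hb by auto
              moreover have "b \<le> c" using T2 2 k0 unfolding y_def by auto
              ultimately show False using bc by auto
            next
              case 3
              then have "y 0 = y (k-1)" unfolding y_def using k0 by auto
              moreover have T2': "y 0 = y (k-1) \<longrightarrow> (\<forall>l<k. y l = y 0)" using T2 by (rule conjunct2)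
              ultimately have "y i = y 0" using i by blast
              then show False using 3 bc k0 i unfolding y_def by auto
            qed
          qed
          then show ?thesis by simp
        qed
        moreover have "(\<lambda>i\<in>{..<k}. b) i = b" using i by auto
        ultimately have "f' (\<lambda>i\<in>{..<k}. b) = f (\<lambda>i\<in>{..<k}. b)"
          unfolding f'_def y_def by simp
        then show ?thesis using b bc unfolding B'_def by auto
      qed
    qed
    have fS: "finite {b\<in>B'. f' (\<lambda>i\<in>{..<k}. b) \<noteq> 0}" using A1 by simp
    have fin: "finite (insert c {b\<in>B'. f' (\<lambda>i\<in>{..<k}. b) \<noteq> 0})" using A1 by auto
    have "card {b\<in>B. f (\<lambda>i\<in>{..<k}. b) \<noteq> 0} \<le> card (insert c {b\<in>B'. f' (\<lambda>i\<in>{..<k}. b) \<noteq> 0})"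
      by (rule card_mono[OF fin incl])
    also have "\<dots> \<le> Suc (card {b\<in>B'. f' (\<lambda>i\<in>{..<k}. b) \<noteq> 0})" 
      using card_insert_if[OF fS, of c] by (auto split: if_splits)
    finally show ?thesis using IH by linarith
  qed
qed

theorem lemma2:
  fixes A :: "'a::linorder set" and k :: nat and f :: "(nat \<Rightarrow> 'a) \<Rightarrow> 'b::field"
  assumes "finite A" and "k \<ge> 2"
    and "\<forall>x \<in> {..<k} \<rightarrow>\<^sub>E A. f x \<noteq> 0 \<longrightarrow> (\<forall>i<k. x 0 \<le> x i \<and> x i \<le> x (k - 1))"
  shows "card {a \<in> A. f (\<lambda>i\<in>{..<k}. a) \<noteq> 0} \<le> slice_rank A k f"
proof -
  let ?Q = "\<lambda>r. \<exists>gs :: nat \<Rightarrow> (nat \<Rightarrow> 'a) \<Rightarrow> 'b.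
      (\<forall>j<r. is_slice A k (gs j)) \<and> (\<forall>x \<in> {..<k} \<rightarrow>\<^sub>E A. f x = (\<Sum>j<r. gs j x))"
  define P where "P = {..<k} \<rightarrow>\<^sub>E A"
  have "finite P" unfolding P_def using assms(1) by (simp add: finite_PiE)
  then obtain e where e: "bij_betw e {0..<card P} P" using ex_bij_betw_nat_finite by blast
  have k0: "0 < k" using assms(2) by auto
  define gs where "gs = (\<lambda>j x. f (e j) * (if x = e j then 1 else 0))"
  have "?Q (card P)"
  proof (intro exI[of _ gs] conjI allI impI ballI)
    fix j assume "j < card P"
    then have ej: "e j \<in> P" using e by (auto simp: bij_betw_def)
    show "is_slice A k (gs j)" unfolding is_slice_def
    proof (intro exI[of _ 0] conjI exI[of _ "\<lambda>a. f (e j) * (if a = e j 0 then 1 else 0)"]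
        exI[of _ "\<lambda>y. if y = (e j)(0 := undefined) then 1 else 0"] ballI)
      show "0 < k" by fact
      fix x assume x: "x \<in> {..<k} \<rightarrow>\<^sub>E A"
      have "x = e j \<longleftrightarrow> x 0 = e j 0 \<and> x(0 := undefined) = (e j)(0 := undefined)"
      proof
        assume "x 0 = e j 0 \<and> x(0 := undefined) = (e j)(0 := undefined)"
        then show "x = e j" by (metis fun_upd_triv fun_upd_upd)
      qed auto
      then show "gs j x = f (e j) * (if x 0 = e j 0 then 1 else 0) * (if x(0 := undefined) = (e j)(0 := undefined) then 1 else 0)"
        unfolding gs_def by auto
    qed
  next
    fix x assume x: "x \<in> {..<k} \<rightarrow>\<^sub>E A"
    have "(\<Sum>j<card P. gs j x) = (\<Sum>j\<in>{0..<card P}. (\<lambda>p. f p * (if x = p then 1 else 0)) (e j))"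
      unfolding gs_def by (simp add: atLeast0LessThan)
    also have "\<dots> = (\<Sum>p\<in>P. f p * (if x = p then 1 else 0))"
      by (rule sum.reindex_bij_betw[OF e])
    also have "\<dots> = f x" using x \<open>finite P\<close> unfolding P_def by (simp add: if_distrib cong: if_cong)
    finally show "f x = (\<Sum>j<card P. gs j x)" by simp
  qed
  then have Qs: "?Q (slice_rank A k f)" unfolding slice_rank_def by (rule LeastI)
  then obtain gs' where g1: "\<forall>j<slice_rank A k f. is_slice A k (gs' j)"
    and g2: "\<forall>x \<in> {..<k} \<rightarrow>\<^sub>E A. f x = (\<Sum>j<slice_rank A k f. gs' j x)" by blast
  have "T k A f" unfolding T_def
  proof (intro ballI impI)
    fix x assume x: "x \<in> {..<k} \<rightarrow>\<^sub>E A" "f x \<noteq> 0"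
    then have ord: "\<forall>i<k. x 0 \<le> x i \<and> x i \<le> x (k - 1)" using assms(3) by blast
    then show "x 0 \<le> x (k-1) \<and> (x 0 = x (k-1) \<longrightarrow> (\<forall>l<k. x l = x 0))"
      using k0 by (metis antisym diff_less less_numeral_extra(1))
  qed
  then show ?thesis using main[OF assms(2) assms(1) _ g1 g2] by blast
qed

end
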